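(* Let $x,y$ be Boolean strings with $|y|\ge1$, and let $w=xy0$. Then $\mu_x(y0)\le 0$ if $\rho(xy)>\mu_x(y)=0$, and $\mu_x(y0)\le\mu_x(y)-1$ otherwise.
   Context: Characteristic strings and forks. A characteristic string is $w=w_1\dots w_n\in\{0,1\}^n$; index $i$ is honest if $w_i=0$ and adversarial if $w_i=1$. A fork for $w$ is a rooted tree with edges directed away from the root $r$ and labeling $\ell:V\to\{0,\dots,n\}$ with (F1) $\ell(r)=0$; (F2) labels strictly increasing along directed paths; (F3) each honest index labels exactly one vertex; (F4) for honest $i<j$ the vertex labeled $i$ has strictly smaller depth than the vertex labeled $j$. Write $F\vdash w$. A vertex is honest if it is the root or labeled by an honest index. A tine is a directed path from the root; its length is its number of edges, $\ell(t)$ the label of its last vertex. A fork is closed if every leaf is honest; a closed fork has a unique longest tine $\hat t$. For closed $F\vdash w$ and tine $t$: $\mathrm{gap}(t)=\mathrm{length}(\hat t)-\mathrm{length}(t)$, $\mathrm{reserve}(t)=|\{i:w_i=1,\ i>\ell(t)\}|$, $\mathrm{reach}(t)=\mathrm{reserve}(t)-\mathrm{gap}(t)$; $\rho(F)=\max_t\mathrm{reach}(t)$, $\rho(w)=\max\{\rho(F):F\vdash w\text{ closed}\}$. For $w=xy$, tines are disjoint over $y$ if they share no edge terminating at a vertex with label $>|x|$ (a tine may be paired with itself). $\mu_x(F)=\max\min\{\mathrm{reach}(t_1),\mathrm{reach}(t_2)\}$ over pairs disjoint over $y$, and $\mu_x(y)=\max\{\mu_x(F):F\vdash xy\text{ closed}\}$.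 *)

theory Defs
  imports Main
begin

text \<open>Characteristic strings are bool lists; index i (1-based, 1 \<le> i \<le> length w)
  is adversarial iff w!(i-1) = True and honest iff w!(i-1) = False.
  A fork is given by a finite vertex set V :: nat set with root 0, a parent
  function par (edges are par v \<rightarrow> v for v \<in> V - {0}) and a labelling lab.
  A tine is identified with its terminal vertex.\<close>

definition adv :: "bool list \<Rightarrow> nat \<Rightarrow> bool" where
  "adv w i \<longleftrightarrow> 1 \<le> i \<and> i \<le> length w \<and> w ! (i - 1)"

definition hon :: "bool list \<Rightarrow> nat \<Rightarrow> bool" where
  "hon w i \<longleftrightarrow> 1 \<le> i \<and> i \<le> length w \<and> \<not> w ! (i - 1)"

definition depth :: "(nat \<Rightarrow> nat) \<Rightarrow> nat \<Rightarrow> nat" where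
  "depth par v = (LEAST k. (par ^^ k) v = 0)"

definition is_fork :: "bool list \<Rightarrow> nat set \<Rightarrow> (nat \<Rightarrow> nat) \<Rightarrow> (nat \<Rightarrow> nat) \<Rightarrow> bool" where
  "is_fork w V par lab \<longleftrightarrow>
     finite V \<and> 0 \<in> V \<and> lab 0 = 0 \<and>
     (\<forall>v\<in>V. lab v \<le> length w) \<and>
     (\<forall>v\<in>V - {0}. par v \<in> V \<and> lab (par v) < lab v) \<and>
     (\<forall>v\<in>V. \<exists>k. (par ^^ k) v = 0) \<and>
     (\<forall>i. hon w i \<longrightarrow> (\<exists>!v. v \<in> V \<and> lab v = i)) \<and>
     (\<forall>u\<in>V. \<forall>v\<in>V. hon w (lab u) \<and> hon w (lab v) \<and> lab u < lab v
          \<longrightarrow> depth par u < depth par v)"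

definition honest_vertex :: "bool list \<Rightarrow> (nat \<Rightarrow> nat) \<Rightarrow> nat \<Rightarrow> bool" where
  "honest_vertex w lab v \<longleftrightarrow> v = 0 \<or> hon w (lab v)"

definition is_leaf :: "nat set \<Rightarrow> (nat \<Rightarrow> nat) \<Rightarrow> nat \<Rightarrow> bool" where
  "is_leaf V par v \<longleftrightarrow> v \<in> V \<and> \<not> (\<exists>u\<in>V - {0}. par u = v)"

definition closed_fork :: "bool list \<Rightarrow> nat set \<Rightarrow> (nat \<Rightarrow> nat) \<Rightarrow> (nat \<Rightarrow> nat) \<Rightarrow> bool" where
  "closed_fork w V par lab \<longleftrightarrow> is_fork w V par lab \<and>
     (\<forall>v. is_leaf V par v \<longrightarrow> honest_vertex w lab v)"

definition height :: "nat set \<Rightarrow> (nat \<Rightarrow> nat) \<Rightarrow> nat" where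
  "height V par = Max (depth par ` V)"

definition reserve :: "bool list \<Rightarrow> (nat \<Rightarrow> nat) \<Rightarrow> nat \<Rightarrow> nat" where
  "reserve w lab t = card {i. adv w i \<and> lab t < i}"

definition gap :: "nat set \<Rightarrow> (nat \<Rightarrow> nat) \<Rightarrow> nat \<Rightarrow> int" where
  "gap V par t = int (height V par) - int (depth par t)"

definition reach :: "bool list \<Rightarrow> nat set \<Rightarrow> (nat \<Rightarrow> nat) \<Rightarrow> (nat \<Rightarrow> nat) \<Rightarrow> nat \<Rightarrow> int" where
  "reach w V par lab t = int (reserve w lab t) - gap V par t"

definition rho_F :: "bool list \<Rightarrow> nat set \<Rightarrow> (nat \<Rightarrow> nat) \<Rightarrow> (nat \<Rightarrow> nat) \<Rightarrow> int" where
  "rho_F w V par lab = Max (reach w V par lab ` V)"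

definition rho :: "bool list \<Rightarrow> int" where
  "rho w = Max {rho_F w V par lab | V par lab. closed_fork w V par lab}"

definition on_tine :: "(nat \<Rightarrow> nat) \<Rightarrow> nat \<Rightarrow> nat \<Rightarrow> bool" where
  "on_tine par t u \<longleftrightarrow> (\<exists>k \<le> depth par t. (par ^^ k) t = u)"

text \<open>Tines are disjoint over y (where m = |x|): no common edge terminating at a
  vertex with label > m; edges are identified with their terminal vertex.\<close>
definition disjoint_over :: "nat \<Rightarrow> (nat \<Rightarrow> nat) \<Rightarrow> (nat \<Rightarrow> nat) \<Rightarrow> nat \<Rightarrow> nat \<Rightarrow> bool" where
  "disjoint_over m par lab t1 t2 \<longleftrightarrow>
     \<not> (\<exists>u. on_tine par t1 u \<and> on_tine par t2 u \<and> m < lab u)"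

definition mu_F :: "nat \<Rightarrow> bool list \<Rightarrow> nat set \<Rightarrow> (nat \<Rightarrow> nat) \<Rightarrow> (nat \<Rightarrow> nat) \<Rightarrow> int" where
  "mu_F m w V par lab = Max {min (reach w V par lab t1) (reach w V par lab t2) | t1 t2.
       t1 \<in> V \<and> t2 \<in> V \<and> disjoint_over m par lab t1 t2}"

definition mu :: "bool list \<Rightarrow> bool list \<Rightarrow> int" where
  "mu x y = Max {mu_F (length x) (x @ y) V par lab | V par lab. closed_fork (x @ y) V par lab}"

end

theory Submission
  imports Defs
begin


lemma depth_0[simp]: "depth par 0 = 0"
  unfolding depth_def by (rule Least_eq_0) simp

lemma depth_Suc:
  assumes "v \<noteq> 0" "(par ^^ k) v = 0"
  shows "depth par v = Suc (depth par (par v))"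
proof -
  have "(LEAST k. (par ^^ k) v = 0) = Suc (LEAST m. (par ^^ Suc m) v = 0)"
    by (rule Least_Suc[where P="\<lambda>k. (par ^^ k) v = 0", OF assms(2)]) (simp add: assms(1))
  moreover have "(\<lambda>m. (par ^^ Suc m) v = 0) = (\<lambda>m. (par ^^ m) (par v) = 0)"
    by (simp only: funpow_Suc_right comp_def)
  ultimately show ?thesis unfolding depth_def by simp
qed

lemma fork_ex: "is_fork w V par lab \<Longrightarrow> v \<in> V \<Longrightarrow> \<exists>k. (par ^^ k) v = 0"
  unfolding is_fork_def by blast

lemma fork_par: "is_fork w V par lab \<Longrightarrow> v \<in> V \<Longrightarrow> v \<noteq> 0 \<Longrightarrow> par v \<in> V \<and> lab (par v) < lab v"
  unfolding is_fork_def by blast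

lemma fork_depth_Suc: "is_fork w V par lab \<Longrightarrow> v \<in> V \<Longrightarrow> v \<noteq> 0 \<Longrightarrow> depth par v = Suc (depth par (par v))"
  by (metis fork_ex depth_Suc)

lemma fork_reach0: "is_fork w V par lab \<Longrightarrow> v \<in> V \<Longrightarrow> (par ^^ depth par v) v = 0"
  unfolding depth_def by (rule LeastI_ex, rule fork_ex)

lemma fork_ne0: "i < depth par v \<Longrightarrow> (par ^^ i) v \<noteq> 0"
  unfolding depth_def using not_less_Least by blast

lemma fork_iter:
  assumes F: "is_fork w V par lab" and v: "v \<in> V"
  shows "i \<le> depth par v \<Longrightarrow> (par ^^ i) v \<in> V \<and> depth par ((par ^^ i) v) = depth par v - i
     \<and> lab ((par ^^ i) v) + i \<le> lab v"
proof (induction i)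
  case 0
  then show ?case using v by simp
next
  case (Suc i)
  define u where "u = (par ^^ i) v"
  have iu: "u \<in> V" "depth par u = depth par v - i" "lab u + i \<le> lab v"
    using Suc unfolding u_def by auto
  have u0: "u \<noteq> 0" using fork_ne0[of i par v] Suc.prems unfolding u_def by simp
  have "par u \<in> V" "lab (par u) < lab u" using fork_par[OF F iu(1) u0] by auto
  moreover have "depth par u = Suc (depth par (par u))" using fork_depth_Suc[OF F iu(1) u0] .
  moreover have "(par ^^ Suc i) v = par u" unfolding u_def by simp
  ultimately show ?case using iu Suc.prems by auto
qed

lemma depth_le_lab: "is_fork w V par lab \<Longrightarrow> v \<in> V \<Longrightarrow> depth par v \<le> lab v"
  using fork_iter[of w V par lab v "depth par v"] by simp

lemma fork_lab_le: "is_fork w V par lab \<Longrightarrow> v \<in> V \<Longrightarrow> lab v \<le> length w"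
  unfolding is_fork_def by blast

lemma fork_basic: "is_fork w V par lab \<Longrightarrow> finite V \<and> 0 \<in> V \<and> lab 0 = 0"
  unfolding is_fork_def by blast

lemma depth_le_height: "finite V \<Longrightarrow> v \<in> V \<Longrightarrow> depth par v \<le> height V par"
  unfolding height_def by simp

lemma height_le: "is_fork w V par lab \<Longrightarrow> height V par \<le> length w"
proof -
  assume F: "is_fork w V par lab"
  have "finite V" "V \<noteq> {}" using fork_basic[OF F] by auto
  moreover have "\<forall>v\<in>V. depth par v \<le> length w"
    using depth_le_lab[OF F] fork_lab_le[OF F] le_trans by blast
  ultimately show ?thesis unfolding height_def by simp
qed

lemma reserve_le: "reserve w lab t \<le> length w"
proof -
  have "{i. adv w i \<and> lab t < i} \<subseteq> {1..length w}" unfolding adv_def by auto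
  then have "card {i. adv w i \<and> lab t < i} \<le> card {1..length w}" by (rule card_mono[rotated]) simp
  then show ?thesis unfolding reserve_def by simp
qed

lemma reach_bounds:
  assumes F: "is_fork w V par lab" and v: "v \<in> V"
  shows "- int (length w) \<le> reach w V par lab v \<and> reach w V par lab v \<le> 2 * int (length w)"
proof -
  have "height V par \<le> length w" using height_le[OF F] .
  moreover have "depth par v \<le> height V par" using depth_le_height fork_basic[OF F] v by blast
  moreover have "reserve w lab v \<le> length w" by (rule reserve_le)
  ultimately show ?thesis unfolding reach_def gap_def by linarith
qed

lemma on_tine_0: "on_tine par 0 u \<Longrightarrow> u = 0"
  unfolding on_tine_def by auto

lemma disj_00: "lab 0 = 0 \<Longrightarrow> disjoint_over m par lab 0 0"
  unfolding disjoint_over_def using on_tine_0 by fastforce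

lemma pairs_finite: "finite V \<Longrightarrow> finite {min (reach w V par lab t1) (reach w V par lab t2) | t1 t2.
       t1 \<in> V \<and> t2 \<in> V \<and> disjoint_over m par lab t1 t2}"
proof -
  assume "finite V"
  have "{min (reach w V par lab t1) (reach w V par lab t2) | t1 t2.
       t1 \<in> V \<and> t2 \<in> V \<and> disjoint_over m par lab t1 t2} \<subseteq>
     (\<lambda>(a,b). min (reach w V par lab a) (reach w V par lab b)) ` (V \<times> V)"
  proof (rule subsetI)
    fix x assume "x \<in> {min (reach w V par lab t1) (reach w V par lab t2) | t1 t2.
       t1 \<in> V \<and> t2 \<in> V \<and> disjoint_over m par lab t1 t2}"
    then obtain t1 t2 where "x = min (reach w V par lab t1) (reach w V par lab t2)" "t1 \<in> V" "t2 \<in> V"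
      by blast
    then show "x \<in> (\<lambda>(a,b). min (reach w V par lab a) (reach w V par lab b)) ` (V \<times> V)"
      by (intro image_eqI[of _ _ "(t1,t2)"]) simp_all
  qed
  moreover have "finite ((\<lambda>(a,b). min (reach w V par lab a) (reach w V par lab b)) ` (V \<times> V))"
    using \<open>finite V\<close> by simp
  ultimately show ?thesis by (rule finite_subset)
qed

lemma mu_F_ge: "finite V \<Longrightarrow> a \<in> V \<Longrightarrow> b \<in> V \<Longrightarrow> disjoint_over m par lab a b \<Longrightarrow>
   min (reach w V par lab a) (reach w V par lab b) \<le> mu_F m w V par lab"
  unfolding mu_F_def by (rule Max_ge[OF pairs_finite]) auto

lemma rho_F_ge: "finite V \<Longrightarrow> a \<in> V \<Longrightarrow> reach w V par lab a \<le> rho_F w V par lab"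
  unfolding rho_F_def by simp

lemma mu_F_in: assumes F: "is_fork w V par lab"
  shows "\<exists>a b. a \<in> V \<and> b \<in> V \<and> disjoint_over m par lab a b \<and>
     mu_F m w V par lab = min (reach w V par lab a) (reach w V par lab b)"
proof -
  let ?P = "{min (reach w V par lab t1) (reach w V par lab t2) | t1 t2.
       t1 \<in> V \<and> t2 \<in> V \<and> disjoint_over m par lab t1 t2}"
  have "finite ?P" using pairs_finite fork_basic[OF F] by blast
  moreover have "?P \<noteq> {}" using fork_basic[OF F] disj_00 by blast
  ultimately have "Max ?P \<in> ?P" by (rule Max_in)
  then show ?thesis unfolding mu_F_def by blast
qed

lemma mu_F_bounds: assumes F: "is_fork w V par lab"
  shows "mu_F m w V par lab \<in> {- int (length w) .. 2 * int (length w)}"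
proof -
  obtain a b where ab: "a \<in> V" "b \<in> V"
    "mu_F m w V par lab = min (reach w V par lab a) (reach w V par lab b)"
    using mu_F_in[OF F, of m] by blast
  have "- int (length w) \<le> reach w V par lab a \<and> reach w V par lab a \<le> 2 * int (length w)"
    by (rule reach_bounds[OF F ab(1)])
  moreover have "- int (length w) \<le> reach w V par lab b \<and> reach w V par lab b \<le> 2 * int (length w)"
    by (rule reach_bounds[OF F ab(2)])
  ultimately show ?thesis unfolding ab(3) by auto
qed

lemma rho_F_bounds: assumes F: "is_fork w V par lab"
  shows "rho_F w V par lab \<in> {- int (length w) .. 2 * int (length w)}"
proof -
  have "finite V" "V \<noteq> {}" using fork_basic[OF F] by auto
  then have "rho_F w V par lab \<in> reach w V par lab ` V" unfolding rho_F_def by simp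
  then obtain a where a: "a \<in> V" "rho_F w V par lab = reach w V par lab a" by blast
  show ?thesis unfolding a(2) using reach_bounds[OF F a(1)] by auto
qed

lemma mu_set_finite: "finite {mu_F m w V par lab | V par lab. closed_fork w V par lab}"
proof (rule finite_subset[of _ "{- int (length w) .. 2 * int (length w)}"])
  show "{mu_F m w V par lab | V par lab. closed_fork w V par lab} \<subseteq> {- int (length w) .. 2 * int (length w)}"
  proof (rule subsetI)
    fix x assume "x \<in> {mu_F m w V par lab | V par lab. closed_fork w V par lab}"
    then obtain V par lab where "x = mu_F m w V par lab" "closed_fork w V par lab" by blast
    then show "x \<in> {- int (length w) .. 2 * int (length w)}"
      using mu_F_bounds[of w V par lab m] unfolding closed_fork_def by simp
  qed
qed simp

lemma rho_set_finite: "finite {rho_F w V par lab | V par lab. closed_fork w V par lab}"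
proof (rule finite_subset[of _ "{- int (length w) .. 2 * int (length w)}"])
  show "{rho_F w V par lab | V par lab. closed_fork w V par lab} \<subseteq> {- int (length w) .. 2 * int (length w)}"
  proof (rule subsetI)
    fix x assume "x \<in> {rho_F w V par lab | V par lab. closed_fork w V par lab}"
    then obtain V par lab where "x = rho_F w V par lab" "closed_fork w V par lab" by blast
    then show "x \<in> {- int (length w) .. 2 * int (length w)}"
      using rho_F_bounds[of w V par lab] unfolding closed_fork_def by simp
  qed
qed simp



lemma adv_snoc: "adv (w @ [False]) i \<longleftrightarrow> adv w i"
  unfolding adv_def by (cases "i \<le> length w") (auto simp: nth_append)

lemma hon_snoc: "hon (w @ [False]) i \<longleftrightarrow> hon w i \<or> i = Suc (length w)"
  unfolding hon_def by (cases "i \<le> length w") (auto simp: nth_append)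

lemma reserve_snoc: "reserve (w @ [False]) lab t = reserve w lab t"
  unfolding reserve_def adv_snoc ..

lemma reserve_path:
  assumes F: "is_fork w0 V par lab" and v: "v \<in> V"
  shows "j \<le> depth par v \<Longrightarrow> (\<forall>i<j. adv ws (lab ((par ^^ i) v))) \<Longrightarrow>
     reserve ws lab v + j \<le> reserve ws lab ((par ^^ j) v)"
proof (induction j)
  case 0
  then show ?case by simp
next
  case (Suc j)
  define u where "u = (par ^^ j) v"
  have iu: "u \<in> V" using fork_iter[OF F v, of j] Suc.prems unfolding u_def by auto
  have u0: "u \<noteq> 0" using fork_ne0[of j par v] Suc.prems unfolding u_def by simp
  have lp: "lab (par u) < lab u" using fork_par[OF F iu u0] by auto
  have au: "adv ws (lab u)" using Suc.prems unfolding u_def by auto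
  have IH: "reserve ws lab v + j \<le> reserve ws lab u" using Suc unfolding u_def by auto
  have fin: "finite {i. adv ws i \<and> lab (par u) < i}"
    by (rule finite_subset[of _ "{..length ws}"]) (auto simp: adv_def)
  have "insert (lab u) {i. adv ws i \<and> lab u < i} \<subseteq> {i. adv ws i \<and> lab (par u) < i}"
    using lp au by auto
  then have "card (insert (lab u) {i. adv ws i \<and> lab u < i}) \<le> card {i. adv ws i \<and> lab (par u) < i}"
    by (rule card_mono[OF fin])
  moreover have "card (insert (lab u) {i. adv ws i \<and> lab u < i}) = Suc (card {i. adv ws i \<and> lab u < i})"
  proof (rule card_insert_disjoint)
    show "finite {i. adv ws i \<and> lab u < i}"
      by (rule finite_subset[of _ "{..length ws}"]) (auto simp: adv_def)
  qed simp
  ultimately have s: "Suc (reserve ws lab u) \<le> reserve ws lab (par u)" unfolding reserve_def by simp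
  have e: "(par ^^ Suc j) v = par u" unfolding u_def by simp
  show ?case unfolding e using IH s by linarith
qed

lemma on_tine_iter:
  assumes F: "is_fork w V par lab" and t: "t \<in> V" and j: "j \<le> depth par t"
    and o: "on_tine par ((par ^^ j) t) u"
  shows "on_tine par t u"
proof -
  have d: "depth par ((par ^^ j) t) = depth par t - j" using fork_iter[OF F t j] by simp
  obtain k where k: "k \<le> depth par t - j" "(par ^^ k) ((par ^^ j) t) = u"
    using o d unfolding on_tine_def by auto
  have "(par ^^ (k + j)) t = u" using k(2) by (simp add: funpow_add)
  moreover have "k + j \<le> depth par t" using k(1) j by simp
  ultimately show ?thesis unfolding on_tine_def by blast
qed

definition chain_par :: "bool list \<Rightarrow> nat \<Rightarrow> nat" where
  "chain_par w v = Max (insert 0 {i. hon w i \<and> i < v})"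

lemma chain_par_fin: "finite (insert 0 {i. hon w i \<and> i < v})"
  by (rule finite_subset[of _ "{..v}"]) auto

lemma chain_par_in: "chain_par w v \<in> insert 0 {i. hon w i \<and> i < v}"
  unfolding chain_par_def by (rule Max_in[OF chain_par_fin]) simp

lemma chain_par_less: "0 < v \<Longrightarrow> chain_par w v < v"
  using chain_par_in[of w v] by auto

lemma chain_par_ge: "u \<in> insert 0 {i. hon w i \<and> i < v} \<Longrightarrow> u \<le> chain_par w v"
  unfolding chain_par_def by (rule Max_ge[OF chain_par_fin])

lemma chain_ex: "\<exists>k. (chain_par w ^^ k) v = 0"
proof (induction v rule: less_induct)
  case (less v)
  show ?case
  proof (cases "v = 0")
    case True then show ?thesis by (metis funpow_0)
  next
    case False
    then obtain k where "(chain_par w ^^ k) (chain_par w v) = 0"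
      using less chain_par_less by blast
    then have "(chain_par w ^^ Suc k) v = 0" by (simp only: funpow_Suc_right comp_def)
    then show ?thesis by blast
  qed
qed

lemma chain_depth_mono:
  "u = 0 \<or> hon w u \<Longrightarrow> u \<le> v \<Longrightarrow> depth (chain_par w) u \<le> depth (chain_par w) v"
proof (induction v arbitrary: u rule: less_induct)
  case (less v)
  show ?case
  proof (cases "u = v")
    case True then show ?thesis by simp
  next
    case False
    then have uv: "u < v" using less.prems by simp
    have "depth (chain_par w) v = Suc (depth (chain_par w) (chain_par w v))"
      using depth_Suc chain_ex uv by (metis not_less0)
    moreover have "u \<le> chain_par w v"
      using chain_par_ge[of u w v] uv less.prems(1) by auto
    moreover have "chain_par w v < v" using chain_par_less uv by simp
    ultimately have "depth (chain_par w) u \<le> depth (chain_par w) (chain_par w v)"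
      using less.IH less.prems(1) by blast
    then show ?thesis using \<open>depth (chain_par w) v = _\<close> by simp
  qed
qed

lemma chain_fork: "closed_fork w (insert 0 {i. hon w i}) (chain_par w) id"
proof -
  let ?V = "insert 0 {i. hon w i}"
  have fin: "finite ?V" by (rule finite_subset[of _ "{..length w}"]) (auto simp: hon_def)
  have lab: "\<forall>v\<in>?V. id v \<le> length w" by (auto simp: hon_def)
  have par: "\<forall>v\<in>?V - {0}. chain_par w v \<in> ?V \<and> id (chain_par w v) < id v"
  proof
    fix v assume "v \<in> ?V - {0}"
    then have "0 < v" by simp
    have "chain_par w v \<in> ?V" using chain_par_in[of w v] by auto
    then show "chain_par w v \<in> ?V \<and> id (chain_par w v) < id v" using chain_par_less[OF \<open>0 < v\<close>] by simp
  qed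
  have F4: "\<forall>u\<in>?V. \<forall>v\<in>?V. hon w (id u) \<and> hon w (id v) \<and> id u < id v
          \<longrightarrow> depth (chain_par w) u < depth (chain_par w) v"
  proof (intro ballI impI)
    fix u v assume "u \<in> ?V" "v \<in> ?V" and h: "hon w (id u) \<and> hon w (id v) \<and> id u < id v"
    then have uv: "u < v" "hon w u" by auto
    have "depth (chain_par w) v = Suc (depth (chain_par w) (chain_par w v))"
      using depth_Suc chain_ex uv by (metis not_less0)
    moreover have "u \<le> chain_par w v"
      using chain_par_ge[of u w v] uv by auto
    ultimately show "depth (chain_par w) u < depth (chain_par w) v"
      using chain_depth_mono[of u w "chain_par w v"] uv by simp
  qed
  have "is_fork w ?V (chain_par w) id"
    unfolding is_fork_def using fin lab par F4 chain_ex by auto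
  moreover have "\<forall>v. is_leaf ?V (chain_par w) v \<longrightarrow> honest_vertex w id v"
    unfolding is_leaf_def honest_vertex_def by auto
  ultimately show ?thesis unfolding closed_fork_def by blast
qed



lemma main_fork:
  fixes w :: "bool list" and M R :: int
  assumes cf: "closed_fork (w @ [False]) V par lab"
    and mlen: "m \<le> length w"
    and t1: "t1 \<in> V" and t2: "t2 \<in> V" and dj: "disjoint_over m par lab t1 t2"
    and Mb: "\<And>V par lab. closed_fork w V par lab \<Longrightarrow> mu_F m w V par lab \<le> M"
    and Rb: "\<And>V par lab. closed_fork w V par lab \<Longrightarrow> rho_F w V par lab \<le> R"
  shows "min (reach (w @ [False]) V par lab t1) (reach (w @ [False]) V par lab t2)
           \<le> (if R > M \<and> M = 0 then 0 else M - 1)"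
proof -
  define w' where "w' = w @ [False]"
  define n where "n = length w"
  have F: "is_fork w' V par lab" using cf unfolding closed_fork_def w'_def by simp
  have finV: "finite V" and V0: "0 \<in> V" and lab0: "lab 0 = 0" using fork_basic[OF F] by auto
  have labw: "\<And>v. v \<in> V \<Longrightarrow> lab v \<le> Suc n" using fork_lab_le[OF F] unfolding w'_def n_def by auto
  have Fhon: "\<forall>i. hon w' i \<longrightarrow> (\<exists>!v. v \<in> V \<and> lab v = i)" using F unfolding is_fork_def by blast
  have F4: "\<forall>u\<in>V. \<forall>v\<in>V. hon w' (lab u) \<and> hon w' (lab v) \<and> lab u < lab v
          \<longrightarrow> depth par u < depth par v" using F unfolding is_fork_def by blast
  have honz: "hon w' (Suc n)" unfolding w'_def n_def hon_snoc by simp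
  have "\<exists>!v. v \<in> V \<and> lab v = Suc n" using Fhon honz by blast
  then obtain z where zV: "z \<in> V" and labz: "lab z = Suc n"
    and zuniq: "\<And>v. v \<in> V \<Longrightarrow> lab v = Suc n \<Longrightarrow> v = z" by blast
  have z0: "z \<noteq> 0" using labz lab0 by (cases "z = 0") auto
  have zleaf: "\<And>u. u \<in> V \<Longrightarrow> u \<noteq> 0 \<Longrightarrow> par u \<noteq> z" using fork_par[OF F] labw labz by fastforce
  have honw: "\<And>i. hon w i \<Longrightarrow> hon w' i" unfolding w'_def hon_snoc by simp
  have honn: "\<And>i. hon w i \<Longrightarrow> i \<le> n" unfolding n_def hon_def by simp
  define Vb where "Vb = {v \<in> V. \<exists>h\<in>V. honest_vertex w lab h \<and> on_tine par h v}"
  have VbV: "Vb \<subseteq> V" unfolding Vb_def by auto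
  have hon_in: "\<And>h. h \<in> V \<Longrightarrow> honest_vertex w lab h \<Longrightarrow> h \<in> Vb"
  proof -
    fix h assume "h \<in> V" "honest_vertex w lab h"
    moreover have "on_tine par h h" unfolding on_tine_def by (rule exI[of _ 0]) simp
    ultimately show "h \<in> Vb" unfolding Vb_def by blast
  qed
  have Vb0: "0 \<in> Vb" using hon_in V0 unfolding honest_vertex_def by simp
  have Vb_desc: "\<And>v. v \<in> Vb \<Longrightarrow> \<exists>h\<in>V. honest_vertex w lab h \<and> (\<exists>k\<le>depth par h. (par ^^ k) h = v)"
    unfolding Vb_def on_tine_def by blast
  have hlab: "\<And>h. honest_vertex w lab h \<Longrightarrow> lab h \<le> n"
    unfolding honest_vertex_def using honn lab0 by auto
  have Vb_lab: "\<And>v. v \<in> Vb \<Longrightarrow> lab v \<le> n"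
  proof -
    fix v assume "v \<in> Vb"
    then obtain h k where "h \<in> V" "honest_vertex w lab h" "k \<le> depth par h" "(par ^^ k) h = v"
      using Vb_desc by blast
    then show "lab v \<le> n" using fork_iter[OF F, of h k] hlab by fastforce
  qed
  have zVb: "z \<notin> Vb" using Vb_lab labz by fastforce
  have dz: "depth par z = Suc (depth par (par z))" using fork_depth_Suc[OF F zV z0] .
  have Vb_depth: "\<And>v. v \<in> Vb \<Longrightarrow> depth par v < depth par z"
  proof -
    fix v assume "v \<in> Vb"
    then obtain h k where h: "h \<in> V" "honest_vertex w lab h" "k \<le> depth par h" "(par ^^ k) h = v"
      using Vb_desc by blast
    have "depth par v \<le> depth par h" using fork_iter[OF F h(1) h(3)] h(4) by simp
    moreover have "depth par h < depth par z"
    proof (cases "h = 0")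
      case True then show ?thesis using dz by simp
    next
      case False
      then have "hon w (lab h)" using h(2) unfolding honest_vertex_def by simp
      moreover have "lab h < lab z" using honn[OF \<open>hon w (lab h)\<close>] labz by simp
      ultimately show ?thesis using F4 h(1) zV honz labz honw by auto
    qed
    ultimately show "depth par v < depth par z" by simp
  qed
  have Vb_par: "\<And>v. v \<in> Vb \<Longrightarrow> v \<noteq> 0 \<Longrightarrow> par v \<in> Vb"
  proof -
    fix v assume v: "v \<in> Vb" "v \<noteq> 0"
    then obtain h k where h: "h \<in> V" "honest_vertex w lab h" "k \<le> depth par h" "(par ^^ k) h = v"
      using Vb_desc by blast
    have "k \<noteq> depth par h" using fork_reach0[OF F h(1)] h(4) v(2) by auto
    then have "Suc k \<le> depth par h" using h(3) by simp
    moreover have "(par ^^ Suc k) h = par v" using h(4) by simp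
    moreover have "par v \<in> V" using fork_par[OF F] v VbV by blast
    ultimately show "par v \<in> Vb" unfolding Vb_def on_tine_def using h(1,2) by blast
  qed
  have cfb: "closed_fork w Vb par lab"
  proof -
    have cc0: "finite Vb" using finV VbV finite_subset by blast
    have cc1: "\<forall>v\<in>Vb. lab v \<le> length w" using Vb_lab n_def by simp
    have cc2: "\<forall>v\<in>Vb - {0}. par v \<in> Vb \<and> lab (par v) < lab v"
      using Vb_par fork_par[OF F] VbV by blast
    have cc3: "\<forall>v\<in>Vb. \<exists>k. (par ^^ k) v = 0" using fork_ex[OF F] VbV by blast
    have cc4: "\<forall>i. hon w i \<longrightarrow> (\<exists>!v. v \<in> Vb \<and> lab v = i)"
    proof (intro allI impI)
      fix i assume hi: "hon w i"
      have ex1: "\<exists>!v. v \<in> V \<and> lab v = i" using Fhon honw[OF hi] by blast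
      obtain v where v: "v \<in> V \<and> lab v = i" and uq: "\<forall>u. u \<in> V \<and> lab u = i \<longrightarrow> u = v"
        using ex1 by (rule ex1E)
      have vb: "v \<in> Vb" using hon_in v hi unfolding honest_vertex_def by simp
      show "\<exists>!v. v \<in> Vb \<and> lab v = i"
      proof (rule ex1I[of _ v])
        show "v \<in> Vb \<and> lab v = i" using vb v by simp
        fix u assume "u \<in> Vb \<and> lab u = i"
        then show "u = v" using uq VbV by blast
      qed
    qed
    have cc5: "\<forall>u\<in>Vb. \<forall>v\<in>Vb. hon w (lab u) \<and> hon w (lab v) \<and> lab u < lab v
          \<longrightarrow> depth par u < depth par v"
      using F4 VbV honw by blast
    have cc6: "\<forall>v. is_leaf Vb par v \<longrightarrow> honest_vertex w lab v"
    proof (intro allI impI)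
      fix v assume lf: "is_leaf Vb par v"
      then have "v \<in> Vb" unfolding is_leaf_def by simp
      then obtain h k where h: "h \<in> V" "honest_vertex w lab h" "k \<le> depth par h" "(par ^^ k) h = v"
        using Vb_desc by blast
      show "honest_vertex w lab v"
      proof (cases k)
        case 0 then show ?thesis using h by simp
      next
        case (Suc k')
        define u where "u = (par ^^ k') h"
        have "u \<in> V" using fork_iter[OF F h(1), of k'] h(3) Suc unfolding u_def by simp
        moreover have "u \<noteq> 0" using fork_ne0[of k' par h] h(3) Suc unfolding u_def by simp
        moreover have "par u = v" using h(4) Suc unfolding u_def by simp
        moreover have "u \<in> Vb"
        proof -
          have "on_tine par h u" unfolding on_tine_def u_def
            by (rule exI[of _ k']) (use h(3) Suc in simp)
          then show ?thesis unfolding Vb_def using h(1,2) \<open>u \<in> V\<close> by blast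
        qed
        ultimately show ?thesis using lf unfolding is_leaf_def by blast
      qed
    qed
    show ?thesis unfolding closed_fork_def is_fork_def using Vb0 lab0 cc0 cc1 cc2 cc3 cc4 cc5 cc6 by (intro conjI) assumption+
  qed
  define H where "H = height V par"
  define Hb where "Hb = height Vb par"
  have finVb: "finite Vb" using finV VbV finite_subset by blast
  have Hb_lt: "Hb < depth par z"
  proof -
    have "Hb \<in> depth par ` Vb" unfolding Hb_def height_def using finVb Vb0 by (intro Max_in) auto
    then show ?thesis using Vb_depth by auto
  qed
  have zH: "depth par z \<le> H" unfolding H_def using depth_le_height finV zV by blast
  have reach'_eq: "\<And>t. reach w' V par lab t = int (reserve w lab t) - (int H - int (depth par t))"
    unfolding reach_def gap_def H_def w'_def reserve_snoc by simp
  have reachb_eq: "\<And>t. reach w Vb par lab t = int (reserve w lab t) - (int Hb - int (depth par t))"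
    unfolding reach_def gap_def Hb_def by simp
  have phi: "\<And>t. t \<in> V \<Longrightarrow> \<exists>j\<le>depth par t. (par ^^ j) t \<in> Vb \<and> (\<forall>i<j. (par ^^ i) t \<notin> Vb)"
  proof -
    fix t assume t: "t \<in> V"
    define P where "P = (\<lambda>j. (par ^^ j) t \<in> Vb)"
    have Pd: "P (depth par t)" unfolding P_def using fork_reach0[OF F t] Vb0 by simp
    show "?thesis t"
      apply (rule exI[of _ "Least P"])
      using Least_le[of P, OF Pd] LeastI[of P, OF Pd] not_less_Least[of _ P] unfolding P_def by blast
  qed
  have path_adv: "\<And>t j i. t \<in> V \<Longrightarrow> j \<le> depth par t \<Longrightarrow> (\<forall>i<j. (par ^^ i) t \<notin> Vb) \<Longrightarrow> i < j
      \<Longrightarrow> (par ^^ i) t \<noteq> z \<Longrightarrow> adv w (lab ((par ^^ i) t))"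
  proof -
    fix t j i assume t: "t \<in> V" and j: "j \<le> depth par t" and nb: "\<forall>i<j. (par ^^ i) t \<notin> Vb"
      and ij: "i < j" and nz: "(par ^^ i) t \<noteq> z"
    define u where "u = (par ^^ i) t"
    have uV: "u \<in> V" using fork_iter[OF F t, of i] ij j unfolding u_def by simp
    have unb: "u \<notin> Vb" using nb ij unfolding u_def by simp
    have u0: "u \<noteq> 0" using unb Vb0 by (cases "u = 0") auto
    have nh: "\<not> hon w (lab u)" using hon_in uV unb unfolding honest_vertex_def by blast
    have "lab u \<noteq> Suc n" using zuniq uV nz unfolding u_def by blast
    then have "lab u \<le> n" using labw uV by fastforce
    moreover have "1 \<le> lab u" using fork_par[OF F uV u0] by simp
    ultimately show "adv w (lab ((par ^^ i) t))" using nh unfolding u_def[symmetric] adv_def hon_def n_def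
      by simp
  qed
  have notz: "\<And>t i. t \<in> V \<Longrightarrow> 0 < i \<Longrightarrow> i \<le> depth par t \<Longrightarrow> (par ^^ i) t \<noteq> z"
  proof -
    fix t i assume t: "t \<in> V" and i: "0 < i" "i \<le> depth par t"
    then obtain i' where i': "i = Suc i'" by (cases i) auto
    have "(par ^^ i') t \<in> V" using fork_iter[OF F t, of i'] i i' by simp
    moreover have "(par ^^ i') t \<noteq> 0" using fork_ne0[of i' par t] i i' by simp
    ultimately show "(par ^^ i) t \<noteq> z" using zleaf i' by simp
  qed
  have proj: "\<And>t. t \<in> V \<Longrightarrow> \<exists>s\<in>Vb. (\<forall>u. on_tine par s u \<longrightarrow> on_tine par t u)
       \<and> (t \<noteq> z \<longrightarrow> reach w' V par lab t \<le> reach w Vb par lab s - 1)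
       \<and> (t = z \<longrightarrow> 0 \<le> reach w Vb par lab s)"
  proof -
    fix t assume t: "t \<in> V"
    obtain j where j: "j \<le> depth par t" "(par ^^ j) t \<in> Vb" "\<forall>i<j. (par ^^ i) t \<notin> Vb"
      using phi[OF t] by blast
    define s where "s = (par ^^ j) t"
    have ot: "\<forall>u. on_tine par s u \<longrightarrow> on_tine par t u"
      using on_tine_iter[OF F t j(1)] unfolding s_def by blast
    have ds: "depth par s = depth par t - j" using fork_iter[OF F t j(1)] unfolding s_def by simp
    have Hb_H: "Hb < H" using Hb_lt zH by simp
    have c1: "t \<noteq> z \<longrightarrow> reach w' V par lab t \<le> reach w Vb par lab s - 1"
    proof
      assume tz: "t \<noteq> z"
      have "\<forall>i<j. adv w (lab ((par ^^ i) t))"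
      proof (intro allI impI)
        fix i assume ij: "i < j"
        have "(par ^^ i) t \<noteq> z" using tz notz[OF t, of i] ij j(1) by (cases "i = 0") auto
        then show "adv w (lab ((par ^^ i) t))" using path_adv[OF t j(1) j(3) ij] by simp
      qed
      then have "reserve w lab t + j \<le> reserve w lab s"
        using reserve_path[OF F t j(1)] unfolding s_def by blast
      moreover have "int (depth par s) = int (depth par t) - int j" using ds j(1) by simp
      ultimately show "reach w' V par lab t \<le> reach w Vb par lab s - 1"
        unfolding reach'_eq reachb_eq using Hb_H by linarith
    qed
    have c2: "t = z \<longrightarrow> 0 \<le> reach w Vb par lab s"
    proof
      assume tz: "t = z"
      have j0: "j \<noteq> 0" using j(2) zVb tz by (cases "j = 0") auto
      then obtain j' where j': "j = Suc j'" by (cases j) auto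
      define p where "p = par z"
      have pV: "p \<in> V" using fork_par[OF F zV z0] unfolding p_def by simp
      have dp: "j' \<le> depth par p" using j(1) j' dz tz unfolding p_def by simp
      have sp: "s = (par ^^ j') p" unfolding s_def p_def tz j' by (simp only: funpow_Suc_right comp_def)
      have "\<forall>i<j'. adv w (lab ((par ^^ i) p))"
      proof (intro allI impI)
        fix i assume ij: "i < j'"
        have e: "(par ^^ i) p = (par ^^ Suc i) z" unfolding p_def by (simp only: funpow_Suc_right comp_def)
        have "(par ^^ Suc i) z \<noteq> z" using notz[OF zV, of "Suc i"] ij j(1) j' tz by simp
        then show "adv w (lab ((par ^^ i) p))" unfolding e
          using path_adv[OF zV, of j "Suc i"] j tz ij j' by simp
      qed
      then have "reserve w lab p + j' \<le> reserve w lab s"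
        using reserve_path[OF F pV dp] sp by blast
      moreover have "int (depth par s) = int (depth par z) - int j" using ds j(1) tz by simp
      ultimately show "0 \<le> reach w Vb par lab s"
        unfolding reachb_eq using Hb_lt j' by linarith
    qed
    show "?thesis t" using j(2) ot c1 c2 unfolding s_def by blast
  qed
  have rz: "reach w' V par lab z \<le> 0"
  proof -
    have e: "{i. adv w i \<and> lab z < i} = {}" using labz unfolding adv_def n_def by auto
    have "reserve w lab z = 0" unfolding reserve_def by (simp only: e card.empty)
    then show ?thesis unfolding reach'_eq using zH by simp
  qed
  have Mpair: "\<And>a b. a \<in> Vb \<Longrightarrow> b \<in> Vb \<Longrightarrow> disjoint_over m par lab a b \<Longrightarrow>
      min (reach w Vb par lab a) (reach w Vb par lab b) \<le> M"
  proof -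
    fix a b assume "a \<in> Vb" "b \<in> Vb" "disjoint_over m par lab a b"
    then have "min (reach w Vb par lab a) (reach w Vb par lab b) \<le> mu_F m w Vb par lab"
      by (rule mu_F_ge[OF finVb])
    then show "min (reach w Vb par lab a) (reach w Vb par lab b) \<le> M" using Mb[OF cfb] by linarith
  qed
  have Rone: "\<And>a. a \<in> Vb \<Longrightarrow> reach w Vb par lab a \<le> R"
  proof -
    fix a assume "a \<in> Vb"
    then have "reach w Vb par lab a \<le> rho_F w Vb par lab" by (rule rho_F_ge[OF finVb])
    then show "reach w Vb par lab a \<le> R" using Rb[OF cfb] by linarith
  qed
  have not_zz: "\<not> (t1 = z \<and> t2 = z)"
  proof
    assume "t1 = z \<and> t2 = z"
    moreover have "on_tine par z z" unfolding on_tine_def by (rule exI[of _ 0]) simp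
    ultimately show False using dj labz mlen unfolding disjoint_over_def n_def by auto
  qed
  obtain s1 where s1: "s1 \<in> Vb" "\<forall>u. on_tine par s1 u \<longrightarrow> on_tine par t1 u"
       "t1 \<noteq> z \<longrightarrow> reach w' V par lab t1 \<le> reach w Vb par lab s1 - 1"
       "t1 = z \<longrightarrow> 0 \<le> reach w Vb par lab s1" using proj[OF t1] by blast
  obtain s2 where s2: "s2 \<in> Vb" "\<forall>u. on_tine par s2 u \<longrightarrow> on_tine par t2 u"
       "t2 \<noteq> z \<longrightarrow> reach w' V par lab t2 \<le> reach w Vb par lab s2 - 1"
       "t2 = z \<longrightarrow> 0 \<le> reach w Vb par lab s2" using proj[OF t2] by blast
  have djs: "disjoint_over m par lab s1 s2" using dj s1(2) s2(2) unfolding disjoint_over_def by blast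
  have M12: "min (reach w Vb par lab s1) (reach w Vb par lab s2) \<le> M" using Mpair[OF s1(1) s2(1) djs] .
  have R1: "reach w Vb par lab s1 \<le> R" and R2: "reach w Vb par lab s2 \<le> R" using Rone s1(1) s2(1) by auto
  define r1 where "r1 = reach w' V par lab t1"
  define r2 where "r2 = reach w' V par lab t2"
  define b1 where "b1 = reach w Vb par lab s1"
  define b2 where "b2 = reach w Vb par lab s2"
  have M12': "b1 \<le> M \<or> b2 \<le> M" using M12 unfolding b1_def[symmetric] b2_def[symmetric] by linarith
  have R1': "b1 \<le> R" and R2': "b2 \<le> R" using R1 R2 unfolding b1_def b2_def by auto
  have mr: "min r1 r2 \<le> r1" "min r1 r2 \<le> r2" by simp_all
  have key: "min r1 r2 \<le> (if R > M \<and> M = 0 then 0 else M - 1)"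
  proof (cases "R > M \<and> M = 0")
    case True
    have "min r1 r2 \<le> 0"
    proof (cases "t1 = z \<or> t2 = z")
      case True
      then have "r1 \<le> 0 \<or> r2 \<le> 0" using rz unfolding r1_def r2_def by auto
      then show ?thesis using mr by linarith
    next
      case False
      then have "r1 \<le> b1 - 1" "r2 \<le> b2 - 1" using s1 s2 unfolding r1_def r2_def b1_def b2_def by auto
      then show ?thesis using mr M12' \<open>R > M \<and> M = 0\<close> by linarith
    qed
    then show ?thesis using True by simp
  next
    case False
    then have MR: "M < R \<Longrightarrow> M \<noteq> 0" by blast
    have "min r1 r2 \<le> M - 1"
    proof (cases "t1 = z")
      case True
      then have "t2 \<noteq> z" using not_zz by simp
      then have h: "r2 \<le> b2 - 1" "r1 \<le> 0" "0 \<le> b1" using s1 s2 True rz unfolding r1_def r2_def b1_def b2_def by auto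
      show ?thesis
      proof (cases "b2 \<le> M")
        case True then show ?thesis using h mr by linarith
      next
        case False
        then have "b1 \<le> M" using M12' by simp
        then have "0 \<le> M" using h by simp
        moreover have "M \<noteq> 0" using MR False R2' by linarith
        ultimately show ?thesis using h mr by linarith
      qed
    next
      case F1: False
      show ?thesis
      proof (cases "t2 = z")
        case True
        then have h: "r1 \<le> b1 - 1" "r2 \<le> 0" "0 \<le> b2" using s1 s2 True F1 rz unfolding r1_def r2_def b1_def b2_def by auto
        show ?thesis
        proof (cases "b1 \<le> M")
          case True then show ?thesis using h mr by linarith
        next
          case False
          then have "b2 \<le> M" using M12' by simp
          then have "0 \<le> M" using h by simp
          moreover have "M \<noteq> 0" using MR False R1' by linarith
          ultimately show ?thesis using h mr by linarith
        qed
      next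
        case False
        then have "r1 \<le> b1 - 1" "r2 \<le> b2 - 1" using s1 s2 F1 unfolding r1_def r2_def b1_def b2_def by auto
        then show ?thesis using mr M12' by linarith
      qed
    qed
    then show ?thesis using False by simp
  qed
  then show ?thesis unfolding r1_def r2_def w'_def .
qed



theorem proposition2:
  fixes x y :: "bool list"
  assumes "length y \<ge> 1"
  shows "if rho (x @ y) > mu x y \<and> mu x y = 0
         then mu x (y @ [False]) \<le> 0
         else mu x (y @ [False]) \<le> mu x y - 1"
proof -
  define w where "w = x @ y"
  have eqw: "x @ (y @ [False]) = w @ [False]" unfolding w_def by simp
  have Mb: "\<And>V par lab. closed_fork w V par lab \<Longrightarrow> mu_F (length x) w V par lab \<le> mu x y"
  proof -
    fix V par lab assume "closed_fork w V par lab"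
    then have "mu_F (length x) (x @ y) V par lab \<in> {mu_F (length x) (x @ y) V par lab | V par lab. closed_fork (x @ y) V par lab}"
      unfolding w_def by blast
    then show "mu_F (length x) w V par lab \<le> mu x y" unfolding mu_def w_def by (rule Max_ge[OF mu_set_finite])
  qed
  have Rb: "\<And>V par lab. closed_fork w V par lab \<Longrightarrow> rho_F w V par lab \<le> rho (x @ y)"
  proof -
    fix V par lab assume "closed_fork w V par lab"
    then have "rho_F (x @ y) V par lab \<in> {rho_F (x @ y) V par lab | V par lab. closed_fork (x @ y) V par lab}"
      unfolding w_def by blast
    then show "rho_F w V par lab \<le> rho (x @ y)" unfolding rho_def w_def by (rule Max_ge[OF rho_set_finite])
  qed
  let ?S = "{mu_F (length x) (w @ [False]) V par lab | V par lab. closed_fork (w @ [False]) V par lab}"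
  have ne: "?S \<noteq> {}" using chain_fork[of "w @ [False]"] by blast
  have "Max ?S \<in> ?S" by (rule Max_in[OF mu_set_finite ne])
  moreover have "mu x (y @ [False]) = Max ?S" unfolding mu_def eqw ..
  ultimately obtain V par lab where cf: "closed_fork (w @ [False]) V par lab"
    and mx: "mu x (y @ [False]) = mu_F (length x) (w @ [False]) V par lab" by auto
  have F: "is_fork (w @ [False]) V par lab" using cf unfolding closed_fork_def by simp
  obtain a b where ab: "a \<in> V" "b \<in> V" "disjoint_over (length x) par lab a b"
    "mu_F (length x) (w @ [False]) V par lab = min (reach (w @ [False]) V par lab a) (reach (w @ [False]) V par lab b)"
    using mu_F_in[OF F, of "length x"] by blast
  have ml: "length x \<le> length w" unfolding w_def by simp
  have "min (reach (w @ [False]) V par lab a) (reach (w @ [False]) V par lab b)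
     \<le> (if rho (x @ y) > mu x y \<and> mu x y = 0 then 0 else mu x y - 1)"
    by (rule main_fork[OF cf ml ab(1) ab(2) ab(3) Mb Rb])
  then have "mu x (y @ [False]) \<le> (if rho (x @ y) > mu x y \<and> mu x y = 0 then 0 else mu x y - 1)"
    using mx ab(4) by simp
  then show ?thesis by (simp split: if_split_asm)
qed

end
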